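(* Let $\Omega$ be a set and $G$ a subgroup of $S=\mathrm{Sym}(\Omega)$ which is discrete in the function topology on $S$ and such that each element of $G$ moves only finitely many elements of $\Omega$. Then $G$ is finite.
   Context: $\mathrm{Sym}(\Omega)$ is the group of all permutations of $\Omega$, with the function topology (pointwise convergence, $\Omega$ discrete); discrete means discrete in the subspace topology. *)

theory Defs
  imports "HOL-Analysis.Analysis" "HOL-Algebra.Bij"
begin

text \<open>Its topspace is
  the set of extensional maps \<Omega> \<rightarrow> \<Omega>, which contains Bij \<Omega> = carrier of
  Sym(\<Omega>) = BijGroup \<Omega>.\<close>
definition fun_topology_on :: "'a set \<Rightarrow> ('a \<Rightarrow> 'a) topology" where
  "fun_topology_on \<Omega> = product_topology (\<lambda>_. discrete_topology \<Omega>) \<Omega>"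

end

theory Submission
  imports Defs
begin

lemma ramsey1:
  assumes "infinite (X::'b set)"
  shows "\<exists>X'\<subseteq>X. infinite X' \<and> ((\<exists>c. \<forall>x\<in>X'. \<phi> x = c) \<or> inj_on \<phi> X')"
proof (cases "finite (\<phi> ` X)")
  case True
  have eq: "X = (\<Union>y\<in>\<phi> ` X. {x\<in>X. \<phi> x = y})" by auto
  have "\<not> (\<forall>y\<in>\<phi> ` X. finite {x\<in>X. \<phi> x = y})"
  proof
    assume "\<forall>y\<in>\<phi> ` X. finite {x\<in>X. \<phi> x = y}"
    then have "finite (\<Union>y\<in>\<phi> ` X. {x\<in>X. \<phi> x = y})" using True by (intro finite_UN_I) auto
    then show False using eq assms by simp
  qed
  then obtain y where "y \<in> \<phi> ` X" "infinite {x\<in>X. \<phi> x = y}" by blast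
  then show ?thesis by (intro exI[of _ "{x\<in>X. \<phi> x = y}"]) auto
next
  case False
  let ?X = "inv_into X \<phi> ` (\<phi> ` X)"
  have sub: "?X \<subseteq> X" by (auto intro: inv_into_into)
  have inj: "inj_on (inv_into X \<phi>) (\<phi> ` X)" by (rule inj_on_inv_into) auto
  have "infinite ?X"
  proof
    assume "finite ?X"
    then have "finite (\<phi> ` X)" using inj by (rule finite_imageD)
    then show False using False by simp
  qed
  moreover have "inj_on \<phi> ?X"
    by (rule inj_onI) (auto simp: f_inv_into_f)
  ultimately show ?thesis using sub by blast
qed

lemma ramsey:
  assumes "finite I" "infinite (X::'b set)"
  shows "\<exists>X'\<subseteq>X. infinite X' \<and> (\<forall>i\<in>I. (\<exists>c. \<forall>x\<in>X'. \<phi> i x = c) \<or> inj_on (\<phi> i) X')"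
  using assms(1)
proof (induction I rule: finite_induct)
  case empty
  then show ?case using assms(2) by blast
next
  case (insert i I)
  then obtain X1 where X1: "X1 \<subseteq> X" "infinite X1"
    "\<forall>j\<in>I. (\<exists>c. \<forall>x\<in>X1. \<phi> j x = c) \<or> inj_on (\<phi> j) X1" by blast
  obtain X2 where X2: "X2 \<subseteq> X1" "infinite X2" "(\<exists>c. \<forall>x\<in>X2. \<phi> i x = c) \<or> inj_on (\<phi> i) X2"
    using ramsey1[where \<phi>="\<phi> i", OF X1(2)] by blast
  have "\<forall>j\<in>insert i I. (\<exists>c. \<forall>x\<in>X2. \<phi> j x = c) \<or> inj_on (\<phi> j) X2"
  proof
    fix j assume j: "j \<in> insert i I"
    show "(\<exists>c. \<forall>x\<in>X2. \<phi> j x = c) \<or> inj_on (\<phi> j) X2"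
    proof (cases "j = i")
      case True
      then show ?thesis using X2(3) by simp
    next
      case False
      then have "j \<in> I" using j by simp
      then have "(\<exists>c. \<forall>x\<in>X1. \<phi> j x = c) \<or> inj_on (\<phi> j) X1" using X1(3) by simp
      then show ?thesis
      proof
        assume "\<exists>c. \<forall>x\<in>X1. \<phi> j x = c"
        then obtain c where "\<forall>x\<in>X1. \<phi> j x = c" ..
        then have "\<forall>x\<in>X2. \<phi> j x = c" using X2(1) by (simp add: subset_iff)
        then show ?thesis by blast
      next
        assume "inj_on (\<phi> j) X1"
        then have "inj_on (\<phi> j) X2" using X2(1) by (rule inj_on_subset)
        then show ?thesis by simp
      qed
    qed
  qed
  moreover have "X2 \<subseteq> X" using X1(1) X2(1) by simp
  ultimately show ?case using X2(2) by blast
qed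

lemma bij_mult_eval:
  assumes "x \<in> Bij S" "y \<in> Bij S" "z \<in> S"
  shows "(x \<otimes>\<^bsub>BijGroup S\<^esub> y) z = x (y z)"
  using assms by (simp add: BijGroup_def compose_def)

lemma bij_inv_eval:
  assumes "x \<in> Bij S" "z \<in> S"
  shows "(inv\<^bsub>BijGroup S\<^esub> x) z = inv_into S x z"
  using assms by (simp add: inv_BijGroup)

theorem lemma11p1:
  fixes \<Omega> :: "'a set" and G :: "('a \<Rightarrow> 'a) set"
  assumes "subgroup G (BijGroup \<Omega>)"
    and "subtopology (fun_topology_on \<Omega>) G = discrete_topology G"
    and "\<forall>g\<in>G. finite {x\<in>\<Omega>. g x \<noteq> x}"
  shows "finite G"
proof (rule ccontr)
  assume infG: "infinite G"
  interpret BG: group "BijGroup \<Omega>" by (rule group_BijGroup)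
  interpret SG: subgroup G "BijGroup \<Omega>" by (rule assms(1))
  let ?one = "\<one>\<^bsub>BijGroup \<Omega>\<^esub>"
  have one_eq: "?one = (\<lambda>x\<in>\<Omega>. x)" by (simp add: BijGroup_def)
  have GB: "G \<subseteq> Bij \<Omega>" using SG.subset by (simp add: BijGroup_def)
  have oneG: "?one \<in> G" by simp
  have "openin (discrete_topology G) {?one}" using oneG by simp
  then have "openin (subtopology (fun_topology_on \<Omega>) G) {?one}" using assms(2) by simp
  then obtain U where U: "openin (fun_topology_on \<Omega>) U" "{?one} = U \<inter> G"
    by (meson openin_subtopology)
  have oneU: "?one \<in> U" using U(2) by blast
  have "\<forall>x\<in>U. \<exists>V. finite {i \<in> \<Omega>. V i \<noteq> topspace (discrete_topology \<Omega>)} \<and>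
       (\<forall>i\<in>\<Omega>. openin (discrete_topology \<Omega>) (V i)) \<and> x \<in> Pi\<^sub>E \<Omega> V \<and> Pi\<^sub>E \<Omega> V \<subseteq> U"
    using U(1) unfolding fun_topology_on_def openin_product_topology_alt .
  then obtain V where V: "finite {i \<in> \<Omega>. V i \<noteq> topspace (discrete_topology \<Omega>)}"
    "\<forall>i\<in>\<Omega>. openin (discrete_topology \<Omega>) (V i)" "?one \<in> Pi\<^sub>E \<Omega> V" "Pi\<^sub>E \<Omega> V \<subseteq> U"
    using oneU by blast
  define F where "F = {i \<in> \<Omega>. V i \<noteq> \<Omega>}"
  have finF: "finite F" using V(1) by (simp add: F_def)
  have FO: "F \<subseteq> \<Omega>" by (auto simp: F_def)
  have key: "g = ?one" if g: "g \<in> G" "\<forall>f\<in>F. g f = f" for g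
  proof -
    have gB: "g \<in> Bij \<Omega>" using GB g(1) by (rule subsetD)
    have "g \<in> Pi\<^sub>E \<Omega> V"
    proof (rule PiE_I)
      fix i assume i: "i \<in> \<Omega>"
      show "g i \<in> V i"
      proof (cases "i \<in> F")
        case True
        have "?one i \<in> V i" using V(3) i by (rule PiE_mem)
        then show ?thesis using g(2) True i by (simp add: one_eq)
      next
        case False
        then have "V i = \<Omega>" using i unfolding F_def by blast
        then show ?thesis using funcset_mem[OF Bij_imp_funcset[OF gB] i] by simp
      qed
    next
      fix i assume "i \<notin> \<Omega>"
      then show "g i = undefined" by (rule extensional_arb[OF Bij_imp_extensional[OF gB]])
    qed
    then have "g \<in> U" using V(4) by (rule rev_subsetD)
    then have "g \<in> U \<inter> G" using g(1) by (rule IntI)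
    then have "g \<in> {?one}" by (simp only: U(2))
    then show ?thesis by simp
  qed
  define \<phi> where "\<phi> = (\<lambda>f (g::'a\<Rightarrow>'a). inv_into \<Omega> g f)"
  obtain G' where G': "G' \<subseteq> G" "infinite G'"
    "\<forall>f\<in>F. (\<exists>c. \<forall>x\<in>G'. \<phi> f x = c) \<or> inj_on (\<phi> f) G'"
    using ramsey[where \<phi>=\<phi>, OF finF infG] by blast
  obtain g1 where g1: "g1 \<in> G'" using G'(2) by (metis finite.emptyI ex_in_conv)
  have "infinite (G' - {g1})" using G'(2) by simp
  then obtain g2 where g2: "g2 \<in> G'" "g2 \<noteq> g1"
    by (metis finite.emptyI ex_in_conv Diff_iff singletonI)
  define a where "a = inv\<^bsub>BijGroup \<Omega>\<^esub> g1 \<otimes>\<^bsub>BijGroup \<Omega>\<^esub> g2"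
  have g1G: "g1 \<in> G" and g2G: "g2 \<in> G" using g1 g2 G' by auto
  have aG: "a \<in> G" unfolding a_def using g1G g2G by simp
  have g1B: "g1 \<in> Bij \<Omega>" and g2B: "g2 \<in> Bij \<Omega>" using g1G g2G GB by auto
  have aB: "a \<in> Bij \<Omega>" using aG GB by auto
  have a_ne: "a \<noteq> ?one"
  proof
    assume "a = ?one"
    have c1: "g1 \<in> carrier (BijGroup \<Omega>)" "g2 \<in> carrier (BijGroup \<Omega>)" using g1G g2G SG.subset by auto
    have "inv\<^bsub>BijGroup \<Omega>\<^esub> g1 \<otimes>\<^bsub>BijGroup \<Omega>\<^esub> g2 = ?one"
      using \<open>a = ?one\<close> unfolding a_def .
    then have "g2 = g1 \<otimes>\<^bsub>BijGroup \<Omega>\<^esub> ?one"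
      using BG.inv_solve_left'[of ?one g1 g2] c1 by simp
    then have "g2 = g1" using c1 by simp
    then show False using g2 by simp
  qed
  define S where "S = {x\<in>\<Omega>. a x \<noteq> x}"
  have finS: "finite S" using assms(3) aG by (simp add: S_def)
  have a_eval: "a z = inv_into \<Omega> g1 (g2 z)" if "z \<in> \<Omega>" for z
  proof -
    have "g2 z \<in> \<Omega>" using Bij_imp_funcset[OF g2B] that by auto
    then show ?thesis unfolding a_def
      using bij_mult_eval[OF _ g2B that] bij_inv_eval[OF g1B] restrict_inv_into_Bij[OF g1B]
        inv_BijGroup[OF g1B] by simp
  qed
  have onto: "h ` \<Omega> = \<Omega>" if "h \<in> Bij \<Omega>" for h
    using that by (simp add: Bij_def bij_betw_def)
  define E where "E = (\<Union>f\<in>F. {g\<in>G'. \<phi> f g \<in> S})"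
  have finE: "finite E" unfolding E_def
  proof (rule finite_UN_I[OF finF])
    fix f assume f: "f \<in> F"
    then have fO: "f \<in> \<Omega>" using FO by auto
    show "finite {g\<in>G'. \<phi> f g \<in> S}"
    proof (cases "inj_on (\<phi> f) G'")
      case True
      then show ?thesis
        by (intro inj_on_finite[OF _ _ finS]) (auto intro: inj_on_subset)
    next
      case False
      then obtain c where c: "\<forall>x\<in>G'. \<phi> f x = c" using G'(3) f by blast
      have c1: "c = inv_into \<Omega> g1 f" using c g1 by (simp add: \<phi>_def)
      have c2: "c = inv_into \<Omega> g2 f" using c g2 by (simp add: \<phi>_def)
      have cO: "c \<in> \<Omega>" using c1 Bij_inv_into_mem[OF g1B fO] by simp
      have "g2 c = f" using c2 fO onto[OF g2B] by (simp add: f_inv_into_f)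
      then have "a c = c" using a_eval[OF cO] c1 by simp
      then have "c \<notin> S" by (simp add: S_def)
      then have E0: "{g\<in>G'. \<phi> f g \<in> S} = {}" using c by auto
      show ?thesis unfolding E0 by (rule finite.emptyI)
    qed
  qed
  have "infinite (G' - E)" using G'(2) finE by simp
  then obtain g where g: "g \<in> G'" "g \<notin> E" by (metis finite.emptyI ex_in_conv Diff_iff)
  have gG: "g \<in> G" using g G' by auto
  have gB: "g \<in> Bij \<Omega>" using gG GB by auto
  define b where "b = g \<otimes>\<^bsub>BijGroup \<Omega>\<^esub> a \<otimes>\<^bsub>BijGroup \<Omega>\<^esub> inv\<^bsub>BijGroup \<Omega>\<^esub> g"
  have bG: "b \<in> G" unfolding b_def using gG aG by simp
  have "\<forall>f\<in>F. b f = f"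
  proof
    fix f assume f: "f \<in> F"
    then have fO: "f \<in> \<Omega>" using FO by auto
    let ?y = "inv_into \<Omega> g f"
    have yO: "?y \<in> \<Omega>" using Bij_inv_into_mem[OF gB fO] .
    have "?y \<notin> S" using g f by (auto simp: E_def \<phi>_def)
    then have ay: "a ?y = ?y" using yO by (simp add: S_def)
    have ginvB: "inv\<^bsub>BijGroup \<Omega>\<^esub> g \<in> Bij \<Omega>" using gG GB by auto
    have gaB: "g \<otimes>\<^bsub>BijGroup \<Omega>\<^esub> a \<in> Bij \<Omega>" using gG aG GB by auto
    have "b f = (g \<otimes>\<^bsub>BijGroup \<Omega>\<^esub> a) ?y"
      unfolding b_def using bij_mult_eval[OF gaB ginvB fO] bij_inv_eval[OF gB fO] by simp
    also have "\<dots> = g ?y" using bij_mult_eval[OF gB aB yO] ay by simp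
    also have "\<dots> = f" using fO onto[OF gB] by (simp add: f_inv_into_f)
    finally show "b f = f" .
  qed
  then have "b = ?one" using key bG by blast
  have c2: "g \<in> carrier (BijGroup \<Omega>)" "a \<in> carrier (BijGroup \<Omega>)" using gG aG SG.subset by auto
  have "(g \<otimes>\<^bsub>BijGroup \<Omega>\<^esub> a) \<otimes>\<^bsub>BijGroup \<Omega>\<^esub> inv\<^bsub>BijGroup \<Omega>\<^esub> g = ?one"
    using \<open>b = ?one\<close> unfolding b_def .
  then have "g \<otimes>\<^bsub>BijGroup \<Omega>\<^esub> a = ?one \<otimes>\<^bsub>BijGroup \<Omega>\<^esub> g"
    using BG.inv_solve_right'[of ?one "g \<otimes>\<^bsub>BijGroup \<Omega>\<^esub> a" g] c2 by simp
  then have "g \<otimes>\<^bsub>BijGroup \<Omega>\<^esub> a = g" using c2 by simp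
  then have "a = ?one" using c2 by simp
  then show False using a_ne by simp
qed

end
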